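(* Let $A\hookrightarrow B$ be a $G$-Galois extension of $\mathbb{Z}$-graded commutative rings, where $G$ is a finite group. If $A$ is nontrivial only in grade $0$ (i.e. $A_n=0$ for all $n\neq 0$), then $B$ is also nontrivial only in grade $0$.
   Context: All gradings are $\mathbb{Z}$-gradings and rings are unital with unital maps. For commutative (graded) rings $A\subseteq B$ and a finite group $G$, the extension $A\hookrightarrow B$ is called $G$-Galois if $G$ is a subgroup of $\mathrm{Aut}(B/A)$ (in the graded case, $G$ acts by automorphisms preserving the grading), the fixed ring satisfies $B^G=A$, and the map $h:B\otimes_A B\to \mathrm{Map}(G,B)\cong\prod_{g\in G}B$, $h(x\otimes y)(g)=x\cdot g(y)$, is an isomorphism of $B$-algebras. *)

theory Defs
  imports Main "HOL-Library.Poly_Mapping"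
begin

definition is_Z_grading :: "(int \<Rightarrow> 'b::comm_ring_1 set) \<Rightarrow> bool" where
  "is_Z_grading Bg \<longleftrightarrow>
     (\<forall>n. 0 \<in> Bg n \<and> (\<forall>x\<in>Bg n. \<forall>y\<in>Bg n. x + y \<in> Bg n \<and> - x \<in> Bg n)) \<and>
     1 \<in> Bg 0 \<and>
     (\<forall>m n. \<forall>x\<in>Bg m. \<forall>y\<in>Bg n. x * y \<in> Bg (m + n)) \<and>
     (\<forall>b. \<exists>F c. finite F \<and> (\<forall>n\<in>F. c n \<in> Bg n) \<and> b = (\<Sum>n\<in>F. c n)) \<and>
     (\<forall>F c. finite F \<and> (\<forall>n\<in>F. c n \<in> Bg n) \<and> (\<Sum>n\<in>F. c n) = 0 \<longrightarrow> (\<forall>n\<in>F. c n = 0))"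

definition is_graded_subring :: "'b::comm_ring_1 set \<Rightarrow> (int \<Rightarrow> 'b set) \<Rightarrow> bool" where
  "is_graded_subring A Bg \<longleftrightarrow>
     0 \<in> A \<and> 1 \<in> A \<and> (\<forall>x\<in>A. \<forall>y\<in>A. x + y \<in> A \<and> - x \<in> A \<and> x * y \<in> A) \<and>
     (\<forall>a\<in>A. \<exists>F c. finite F \<and> (\<forall>n\<in>F. c n \<in> A \<inter> Bg n) \<and> a = (\<Sum>n\<in>F. c n))"

text \<open>B \<otimes>_A B is the quotient of the free abelian group Z[B \<times> B] (finitely supported
 functions B \<times> B \<Rightarrow> int) by the subgroup tensor_rel A generated by bi-additivity and
 A-balancedness relations.\<close>

inductive_set tensor_rel :: "'b::comm_ring_1 set \<Rightarrow> ('b \<times> 'b \<Rightarrow>\<^sub>0 int) set"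
  for A :: "'b set" where
  zero: "0 \<in> tensor_rel A"
| diff: "z \<in> tensor_rel A \<Longrightarrow> w \<in> tensor_rel A \<Longrightarrow> z - w \<in> tensor_rel A"
| ladd: "Poly_Mapping.single (x + x', y) 1 - Poly_Mapping.single (x, y) 1
           - Poly_Mapping.single (x', y) 1 \<in> tensor_rel A"
| radd: "Poly_Mapping.single (x, y + y') 1 - Poly_Mapping.single (x, y) 1
           - Poly_Mapping.single (x, y') 1 \<in> tensor_rel A"
| bal: "a \<in> A \<Longrightarrow> Poly_Mapping.single (x * a, y) 1 - Poly_Mapping.single (x, a * y) 1
           \<in> tensor_rel A"

text \<open>The map h on formal sums: h(\<Sum> k_i (x_i,y_i))(g) = \<Sum> k_i x_i g(y_i).
 It factors through B \<otimes>_A B when G fixes A.\<close>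

definition galois_h :: "('b \<times> 'b \<Rightarrow>\<^sub>0 int) \<Rightarrow> ('b \<Rightarrow> 'b) \<Rightarrow> 'b::comm_ring_1" where
  "galois_h z g = (\<Sum>p\<in>Poly_Mapping.keys z. of_int (Poly_Mapping.lookup z p) * (fst p * g (snd p)))"

definition is_ring_aut :: "('b::comm_ring_1 \<Rightarrow> 'b) \<Rightarrow> bool" where
  "is_ring_aut g \<longleftrightarrow> bij g \<and> (\<forall>x y. g (x + y) = g x + g y \<and> g (x * y) = g x * g y) \<and> g 1 = 1"

text \<open>G is a finite subgroup of Aut(B/A) consisting of grading-preserving automorphisms,
 B^G = A, and h : B \<otimes>_A B \<rightarrow> Map(G,B) is bijective (it is automatically a homomorphism
 of B-algebras, so this is the isomorphism condition). Injectivity on the quotient: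
 every formal sum in the kernel of h lies in tensor_rel A.\<close>

definition graded_galois :: "'b::comm_ring_1 set \<Rightarrow> (int \<Rightarrow> 'b set) \<Rightarrow> ('b \<Rightarrow> 'b) set \<Rightarrow> bool" where
  "graded_galois A Bg G \<longleftrightarrow>
     finite G \<and> id \<in> G \<and> (\<forall>g\<in>G. \<forall>g'\<in>G. g \<circ> g' \<in> G) \<and> (\<forall>g\<in>G. inv g \<in> G) \<and>
     (\<forall>g\<in>G. is_ring_aut g \<and> (\<forall>a\<in>A. g a = a) \<and> (\<forall>n. g ` Bg n \<subseteq> Bg n)) \<and>
     {b. \<forall>g\<in>G. g b = b} = A \<and>
     (\<forall>z. (\<forall>g\<in>G. galois_h z g = 0) \<longrightarrow> z \<in> tensor_rel A) \<and>
     (\<forall>f :: ('b \<Rightarrow> 'b) \<Rightarrow> 'b. \<exists>z. \<forall>g\<in>G. galois_h z g = f g)"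

end

theory Submission
  imports Defs
begin

definition LF :: "('b \<times> 'b \<Rightarrow> 'b) \<Rightarrow> ('b \<times> 'b \<Rightarrow>\<^sub>0 int) \<Rightarrow> 'b::comm_ring_1" where
  "LF F z = (\<Sum>p\<in>Poly_Mapping.keys z. of_int (Poly_Mapping.lookup z p) * F p)"

lemma LF_superset:
  assumes "finite S" "Poly_Mapping.keys z \<subseteq> S"
  shows "LF F z = (\<Sum>p\<in>S. of_int (Poly_Mapping.lookup z p) * F p)"
  unfolding LF_def by (rule sum.mono_neutral_left) (use assms in \<open>auto simp: in_keys_iff\<close>)

lemma LF_add: "LF F (z + w) = LF F z + LF F w"
proof -
  let ?S = "Poly_Mapping.keys z \<union> Poly_Mapping.keys w"
  have "LF F (z + w) = (\<Sum>p\<in>?S. of_int (Poly_Mapping.lookup (z+w) p) * F p)"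
    by (rule LF_superset) (auto simp: keys_add)
  also have "\<dots> = (\<Sum>p\<in>?S. of_int (Poly_Mapping.lookup z p) * F p) + (\<Sum>p\<in>?S. of_int (Poly_Mapping.lookup w p) * F p)"
    by (simp add: lookup_add distrib_right sum.distrib)
  also have "\<dots> = LF F z + LF F w"
    by (simp add: LF_superset[of ?S z] LF_superset[of ?S w])
  finally show ?thesis .
qed

lemma LF_diff: "LF F (z - w) = LF F z - LF F w"
proof -
  let ?S = "Poly_Mapping.keys z \<union> Poly_Mapping.keys w"
  have "LF F (z - w) = (\<Sum>p\<in>?S. of_int (Poly_Mapping.lookup (z-w) p) * F p)"
    by (rule LF_superset) (auto simp: in_keys_iff lookup_minus)
  also have "\<dots> = (\<Sum>p\<in>?S. of_int (Poly_Mapping.lookup z p) * F p) - (\<Sum>p\<in>?S. of_int (Poly_Mapping.lookup w p) * F p)"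
    by (simp add: lookup_minus left_diff_distrib sum_subtractf)
  also have "\<dots> = LF F z - LF F w"
    by (simp add: LF_superset[of ?S z] LF_superset[of ?S w])
  finally show ?thesis .
qed

lemma LF_zero: "LF F 0 = 0"
  by (simp add: LF_def)

lemma LF_single: "LF F (Poly_Mapping.single p k) = of_int k * F p"
  by (subst LF_superset[of "{p}"]) (auto simp: lookup_single)

lemma LF_sum: "finite S \<Longrightarrow> LF F (sum f S) = (\<Sum>s\<in>S. LF F (f s))"
  by (induction S rule: finite_induct) (auto simp: LF_zero LF_add)

lemma LF_rel:
  assumes "z \<in> tensor_rel A"
    and "\<And>x x' y. F (x + x', y) = F (x, y) + F (x', y)"
    and "\<And>x y y'. F (x, y + y') = F (x, y) + F (x, y')"
    and "\<And>a x y. a \<in> A \<Longrightarrow> F (x * a, y) = F (x, a * y)"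
  shows "LF F z = 0"
  using assms(1)
  by induction (auto simp: LF_zero LF_diff LF_single assms(2-4))


lemma grading_facts:
  assumes "is_Z_grading Bg"
  shows "0 \<in> Bg n" "x \<in> Bg n \<Longrightarrow> y \<in> Bg n \<Longrightarrow> x + y \<in> Bg n"
    "x \<in> Bg n \<Longrightarrow> - x \<in> Bg n" "x \<in> Bg n \<Longrightarrow> y \<in> Bg n \<Longrightarrow> x - y \<in> Bg n"
    "x \<in> Bg m \<Longrightarrow> y \<in> Bg n \<Longrightarrow> x * y \<in> Bg (m + n)"
    "\<exists>F c. finite F \<and> (\<forall>n\<in>F. c n \<in> Bg n) \<and> b = (\<Sum>n\<in>F. c n)"
    "finite F \<Longrightarrow> (\<forall>n\<in>F. c n \<in> Bg n) \<Longrightarrow> (\<Sum>n\<in>F. c n) = 0 \<Longrightarrow> (\<forall>n\<in>F. c n = 0)"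
  using assms unfolding is_Z_grading_def
  by (auto simp: diff_conv_add_uminus simp del: add_uminus_conv_diff)

lemma grading_uniq:
  assumes gr: "is_Z_grading Bg" and F: "finite F" "\<forall>n\<in>F. c n \<in> Bg n"
    and F': "finite F'" "\<forall>n\<in>F'. c' n \<in> Bg n" and eq: "sum c F = sum c' F'"
  shows "(if n\<in>F then c n else 0) = (if n\<in>F' then c' n else 0)"
proof -
  define d where "d m = (if m\<in>F then c m else 0) - (if m\<in>F' then c' m else 0)" for m
  have s1: "(\<Sum>m\<in>F\<union>F'. if m\<in>F then c m else 0) = sum c F"
    by (rule sum.mono_neutral_cong_right) (use F F' in auto)
  have s2: "(\<Sum>m\<in>F\<union>F'. if m\<in>F' then c' m else 0) = sum c' F'"
    by (rule sum.mono_neutral_cong_right) (use F F' in auto)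
  have "(\<Sum>m\<in>F\<union>F'. d m) = 0"
    unfolding d_def sum_subtractf s1 s2 eq by simp
  moreover have "\<forall>m\<in>F\<union>F'. d m \<in> Bg m"
    unfolding d_def using F F' grading_facts[OF gr] by auto
  ultimately have "\<forall>m\<in>F\<union>F'. d m = 0"
    using grading_facts(7)[OF gr] F F' by blast
  then show ?thesis unfolding d_def by (cases "n \<in> F \<union> F'") auto
qed

definition comp :: "(int \<Rightarrow> 'b set) \<Rightarrow> 'b \<Rightarrow> int \<Rightarrow> 'b::comm_ring_1" where
  "comp Bg y n = (THE v. \<exists>F c. finite F \<and> (\<forall>m\<in>F. c m \<in> Bg m) \<and> y = sum c F \<and> v = (if n\<in>F then c n else 0))"

lemma comp_eq:
  assumes gr: "is_Z_grading Bg" and F: "finite F" "\<forall>m\<in>F. c m \<in> Bg m" "y = sum c F"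
  shows "comp Bg y n = (if n\<in>F then c n else 0)"
  unfolding comp_def
proof (rule the_equality)
  show "\<exists>F' c'. finite F' \<and> (\<forall>m\<in>F'. c' m \<in> Bg m) \<and> y = sum c' F' \<and> (if n\<in>F then c n else 0) = (if n\<in>F' then c' n else 0)"
    using F by blast
next
  fix v assume "\<exists>F' c'. finite F' \<and> (\<forall>m\<in>F'. c' m \<in> Bg m) \<and> y = sum c' F' \<and> v = (if n\<in>F' then c' n else 0)"
  then obtain F' c' where "finite F'" "\<forall>m\<in>F'. c' m \<in> Bg m" "y = sum c' F'" "v = (if n\<in>F' then c' n else 0)"
    by blast
  then show "v = (if n\<in>F then c n else 0)"
    using grading_uniq[OF gr F(1,2), of F' c' n] F(3) by simp
qed

lemma comp_repr:
  assumes gr: "is_Z_grading Bg"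
  obtains F where "finite F" "\<forall>n. n \<notin> F \<longrightarrow> comp Bg y n = 0" "y = (\<Sum>n\<in>F. comp Bg y n)"
proof -
  obtain F c where F: "finite F" "\<forall>n\<in>F. c n \<in> Bg n" "y = sum c F"
    using grading_facts(6)[OF gr] by blast
  have "\<And>n. comp Bg y n = (if n\<in>F then c n else 0)" using comp_eq[OF gr F] .
  then show ?thesis using that[of F] F by auto
qed

lemma comp_in:
  assumes gr: "is_Z_grading Bg"
  shows "comp Bg y n \<in> Bg n"
proof -
  obtain F c where F: "finite F" "\<forall>n\<in>F. c n \<in> Bg n" "y = sum c F"
    using grading_facts(6)[OF gr] by blast
  show ?thesis using comp_eq[OF gr F, of n] F grading_facts(1)[OF gr] by auto
qed

lemma comp_sum:
  assumes gr: "is_Z_grading Bg" and S: "finite S" "\<forall>n. n \<notin> S \<longrightarrow> comp Bg y n = 0"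
  shows "y = (\<Sum>n\<in>S. comp Bg y n)"
proof -
  obtain F where F: "finite F" "\<forall>n. n \<notin> F \<longrightarrow> comp Bg y n = 0" "y = (\<Sum>n\<in>F. comp Bg y n)"
    using comp_repr[OF gr] by blast
  have "(\<Sum>n\<in>F. comp Bg y n) = (\<Sum>n\<in>F \<union> S. comp Bg y n)"
    by (rule sum.mono_neutral_left) (use F S in auto)
  also have "\<dots> = (\<Sum>n\<in>S. comp Bg y n)"
    by (rule sum.mono_neutral_right) (use F S in auto)
  finally show ?thesis using F by simp
qed

lemma comp_add:
  assumes gr: "is_Z_grading Bg"
  shows "comp Bg (x + y) n = comp Bg x n + comp Bg y n"
proof -
  obtain Fx where Fx: "finite Fx" "\<forall>n. n \<notin> Fx \<longrightarrow> comp Bg x n = 0" "x = (\<Sum>n\<in>Fx. comp Bg x n)"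
    using comp_repr[OF gr] by blast
  obtain Fy where Fy: "finite Fy" "\<forall>n. n \<notin> Fy \<longrightarrow> comp Bg y n = 0" "y = (\<Sum>n\<in>Fy. comp Bg y n)"
    using comp_repr[OF gr] by blast
  let ?S = "Fx \<union> Fy"
  have "x = (\<Sum>n\<in>?S. comp Bg x n)" using comp_sum[OF gr, of ?S x] Fx Fy by auto
  moreover have "y = (\<Sum>n\<in>?S. comp Bg y n)" using comp_sum[OF gr, of ?S y] Fx Fy by auto
  ultimately have "x + y = (\<Sum>m\<in>?S. comp Bg x m + comp Bg y m)"
    by (simp add: sum.distrib)
  moreover have "\<forall>m\<in>?S. comp Bg x m + comp Bg y m \<in> Bg m"
    using comp_in[OF gr] grading_facts(2)[OF gr] by blast
  ultimately have "comp Bg (x + y) n = (if n \<in> ?S then comp Bg x n + comp Bg y n else 0)"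
    using comp_eq[OF gr, of ?S "\<lambda>m. comp Bg x m + comp Bg y m" "x + y" n] Fx Fy by blast
  then show ?thesis using Fx Fy by auto
qed

lemma comp_mult_hom:
  assumes gr: "is_Z_grading Bg" and b: "b \<in> Bg k"
  shows "comp Bg (b * y) q = b * comp Bg y (q - k)"
proof -
  obtain F where F: "finite F" "\<forall>n. n \<notin> F \<longrightarrow> comp Bg y n = 0" "y = (\<Sum>n\<in>F. comp Bg y n)"
    using comp_repr[OF gr] by blast
  have inj: "inj_on (\<lambda>m. m + k) F" by (auto simp: inj_on_def)
  have "b * y = (\<Sum>m\<in>F. b * comp Bg y m)"
    using F(3) by (metis sum_distrib_left)
  also have "\<dots> = (\<Sum>j\<in>(\<lambda>m. m + k) ` F. b * comp Bg y (j - k))"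
    by (subst sum.reindex[OF inj]) simp
  finally have eq: "b * y = (\<Sum>j\<in>(\<lambda>m. m + k) ` F. b * comp Bg y (j - k))" .
  have "\<forall>j\<in>(\<lambda>m. m + k) ` F. b * comp Bg y (j - k) \<in> Bg j"
  proof
    fix j assume "j \<in> (\<lambda>m. m + k) ` F"
    have "b * comp Bg y (j - k) \<in> Bg (k + (j - k))"
      using grading_facts(5)[OF gr b comp_in[OF gr]] .
    then show "b * comp Bg y (j - k) \<in> Bg j" by simp
  qed
  then have "comp Bg (b * y) q = (if q \<in> (\<lambda>m. m + k) ` F then b * comp Bg y (q - k) else 0)"
    using comp_eq[OF gr _ _ eq] F(1) by blast
  moreover have "q \<notin> (\<lambda>m. m + k) ` F \<Longrightarrow> comp Bg y (q - k) = 0"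
    using F(2) by (metis (no_types, lifting) diff_add_cancel image_eqI)
  ultimately show ?thesis by auto
qed

lemma A_in_Bg0:
  assumes "is_graded_subring A Bg" "\<forall>n. n \<noteq> 0 \<longrightarrow> A \<inter> Bg n = {0}" "is_Z_grading Bg" "a \<in> A"
  shows "a \<in> Bg 0"
proof -
  obtain F c where F: "finite F" "\<forall>n\<in>F. c n \<in> A \<inter> Bg n" "a = sum c F"
    using assms(1,4) unfolding is_graded_subring_def by blast
  have "\<forall>n\<in>F. n \<noteq> 0 \<longrightarrow> c n = 0" using F(2) assms(2) by blast
  have z: "\<forall>n\<in>F. n \<noteq> 0 \<longrightarrow> c n = 0" using F(2) assms(2) by blast
  have "a = (\<Sum>n\<in>F \<inter> {0}. c n)"
    unfolding F(3) by (rule sum.mono_neutral_right) (use F z in auto)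
  then show ?thesis using F(2) grading_facts(1)[OF assms(3)]
    by (cases "0 \<in> F") auto
qed


lemma galois_h_LF: "galois_h z g = LF (\<lambda>p. fst p * g (snd p)) z"
  by (simp add: galois_h_def LF_def)

lemma bounded_finite_int:
  fixes Q :: "int set"
  assumes "finite Q" and n: "n \<noteq> 0"
  shows "\<exists>k::nat. q - int k * n \<notin> Q"
proof -
  define M where "M = (\<Sum>x\<in>Q. \<bar>x\<bar>)"
  have Mb: "\<And>x. x \<in> Q \<Longrightarrow> \<bar>x\<bar> \<le> M"
    unfolding M_def using assms(1) by (intro member_le_sum) auto
  define k where "k = nat (\<bar>q\<bar> + M + 1)"
  have M0: "M \<ge> 0" unfolding M_def by (simp add: sum_nonneg)
  have kk: "int k = \<bar>q\<bar> + M + 1" unfolding k_def using M0 by simp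
  have "int k \<le> int k * \<bar>n\<bar>" using n by (simp add: mult_le_cancel_left1; linarith)
  then have "\<bar>int k * n\<bar> \<ge> int k" by (simp add: abs_mult)
  then have "\<bar>q - int k * n\<bar> > M" using kk by linarith
  then show ?thesis using Mb by (metis not_less)
qed

theorem theorem3p2:
  fixes A :: "'b::comm_ring_1 set" and Bg :: "int \<Rightarrow> 'b set" and G :: "('b \<Rightarrow> 'b) set"
  assumes "is_Z_grading Bg"
    and "is_graded_subring A Bg"
    and "graded_galois A Bg G"
    and "\<forall>n. n \<noteq> 0 \<longrightarrow> A \<inter> Bg n = {0}"
  shows "\<forall>n. n \<noteq> 0 \<longrightarrow> Bg n = {0}"
proof (intro allI impI)
  note gr = assms(1)
  fix n :: int assume n: "n \<noteq> 0"
  have GG: "finite G" "id \<in> G" "\<forall>g\<in>G. is_ring_aut g"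
    "\<forall>z. (\<forall>g\<in>G. galois_h z g = 0) \<longrightarrow> z \<in> tensor_rel A"
    "\<forall>f :: ('b \<Rightarrow> 'b) \<Rightarrow> 'b. \<exists>z. \<forall>g\<in>G. galois_h z g = f g"
    using assms(3) unfolding graded_galois_def by auto
  obtain z where hz: "\<forall>g\<in>G. galois_h z g = (if g = id then 1 else 0)"
    using spec[OF GG(5), of "\<lambda>g. if g = id then 1 else 0"] by blast
  have "b = 0" if b: "b \<in> Bg n" for b
  proof -
    define K where "K = Poly_Mapping.keys z"
    have finK: "finite K" unfolding K_def by simp
    define z1 where "z1 = (\<Sum>p\<in>K. Poly_Mapping.single (b * fst p, snd p) (Poly_Mapping.lookup z p))"
    define z2 where "z2 = (\<Sum>p\<in>K. Poly_Mapping.single (fst p, b * snd p) (Poly_Mapping.lookup z p))"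
    have LF1: "LF F z1 = (\<Sum>p\<in>K. of_int (Poly_Mapping.lookup z p) * F (b * fst p, snd p))" for F
      unfolding z1_def by (simp add: LF_sum[OF finK] LF_single)
    have LF2: "LF F z2 = (\<Sum>p\<in>K. of_int (Poly_Mapping.lookup z p) * F (fst p, b * snd p))" for F
      unfolding z2_def by (simp add: LF_sum[OF finK] LF_single)
    have "z1 - z2 \<in> tensor_rel A"
    proof -
      have "galois_h (z1 - z2) g = 0" if g: "g \<in> G" for g
      proof -
        have hom: "g (x * y) = g x * g y" for x y using GG(3) g unfolding is_ring_aut_def by blast
        have "galois_h (z1 - z2) g = LF (\<lambda>p. fst p * g (snd p)) z1 - LF (\<lambda>p. fst p * g (snd p)) z2"
          by (simp add: galois_h_LF LF_diff)
        also have "\<dots> = b * galois_h z g - g b * galois_h z g"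
          unfolding LF1 LF2 unfolding galois_h_def K_def[symmetric]
          by (simp add: hom sum_distrib_left mult_ac)
        also have "\<dots> = 0" using hz g by auto
        finally show ?thesis .
      qed
      then show ?thesis using GG(4) by blast
    qed
    define s where "s q = LF (\<lambda>p. fst p * comp Bg (snd p) q) z" for q
    have step: "b * s q = b * s (q - n)" for q
    proof -
      have "LF (\<lambda>p. fst p * comp Bg (snd p) q) (z1 - z2) = 0"
      proof (rule LF_rel[OF \<open>z1 - z2 \<in> tensor_rel A\<close>])
        show "\<And>x x' y. fst (x + x', y) * comp Bg (snd (x + x', y)) q =
          fst (x, y) * comp Bg (snd (x, y)) q + fst (x', y) * comp Bg (snd (x', y)) q"
          by (simp add: distrib_right)
        show "\<And>x y y'. fst (x, y + y') * comp Bg (snd (x, y + y')) q =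
          fst (x, y) * comp Bg (snd (x, y)) q + fst (x, y') * comp Bg (snd (x, y')) q"
          by (simp add: comp_add[OF gr] distrib_left)
        show "\<And>a x y. a \<in> A \<Longrightarrow> fst (x * a, y) * comp Bg (snd (x * a, y)) q =
          fst (x, a * y) * comp Bg (snd (x, a * y)) q"
          using comp_mult_hom[OF gr A_in_Bg0[OF assms(2,4,1)]] by (simp add: mult_ac)
      qed
      then have "LF (\<lambda>p. fst p * comp Bg (snd p) q) z1 = LF (\<lambda>p. fst p * comp Bg (snd p) q) z2"
        by (simp add: LF_diff)
      then show ?thesis
        unfolding LF1 LF2 unfolding s_def LF_def K_def[symmetric]
        by (simp add: comp_mult_hom[OF gr b] sum_distrib_left mult_ac)
    qed
    have stepk: "b * s q = b * s (q - int k * n)" for q k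
    proof (induction k)
      case 0 then show ?case by simp
    next
      case (Suc k)
      have "b * s (q - int k * n) = b * s (q - int k * n - n)" by (rule step)
      then show ?case using Suc by (simp add: algebra_simps)
    qed
    define Q where "Q = (\<Union>p\<in>K. {m. comp Bg (snd p) m \<noteq> 0})"
    have finQ: "finite Q"
      unfolding Q_def
    proof (intro finite_UN_I finK)
      fix p
      obtain F where F: "finite F" "\<forall>m. m \<notin> F \<longrightarrow> comp Bg (snd p) m = 0"
        using comp_repr[OF gr] by metis
      then show "finite {m. comp Bg (snd p) m \<noteq> 0}"
        by (metis (mono_tags, lifting) mem_Collect_eq rev_finite_subset subsetI)
    qed
    have s0: "s q = 0" if "q \<notin> Q" for q
      using that unfolding s_def LF_def Q_def K_def by (auto intro!: sum.neutral)
    have bs0: "b * s q = 0" for q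
    proof -
      obtain k :: nat where "q - int k * n \<notin> Q" using bounded_finite_int[OF finQ n] by blast
      then show ?thesis using stepk[of q k] s0 by simp
    qed
    have sum1: "(\<Sum>q\<in>Q. s q) = 1"
    proof -
      have "(\<Sum>q\<in>Q. s q) = (\<Sum>p\<in>K. of_int (Poly_Mapping.lookup z p) * (fst p * (\<Sum>q\<in>Q. comp Bg (snd p) q)))"
        unfolding s_def LF_def K_def[symmetric]
        by (subst sum.swap) (simp add: sum_distrib_left)
      also have "\<dots> = (\<Sum>p\<in>K. of_int (Poly_Mapping.lookup z p) * (fst p * id (snd p)))"
      proof (rule sum.cong[OF refl])
        fix p assume p: "p \<in> K"
        have "snd p = (\<Sum>q\<in>Q. comp Bg (snd p) q)"
          by (rule comp_sum[OF gr finQ]) (use p in \<open>auto simp: Q_def\<close>)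
        then show "of_int (Poly_Mapping.lookup z p) * (fst p * (\<Sum>q\<in>Q. comp Bg (snd p) q)) =
          of_int (Poly_Mapping.lookup z p) * (fst p * id (snd p))" by simp
      qed
      also have "\<dots> = galois_h z id" unfolding galois_h_def K_def by simp
      also have "\<dots> = 1" using hz GG(2) by simp
      finally show ?thesis .
    qed
    have "b = b * (\<Sum>q\<in>Q. s q)" using sum1 by simp
    also have "\<dots> = 0" by (simp add: sum_distrib_left bs0)
    finally show ?thesis .
  qed
  then show "Bg n = {0}" using grading_facts(1)[OF gr] by blast
qed

end
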